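(* Let $C\subseteq F^n$ be a binary perfect code of length $n=2^k-1$ containing $0^n$, and let $\lambda:C\to\{0,1\}$ be any function with $\lambda(0^n)=0$. Let $V_C^\lambda=\{(x+y,\ |x|+\lambda(y),\ x)\mid x\in F^n,\ y\in C\}\subseteq F^{2n+1}$ be the Vasil'ev code, where $|x|=x_1+\dots+x_n \pmod 2$. Let $y'\in C$ and $z=(y',\lambda(y'),0^n)\in V_C^\lambda$. A permutation $\rho_z\in S_{2n+1}$ belongs to $St_{n+1}(\mathrm{Rot}_z(V_C^\lambda))$ if and only if it can be written as $\rho_z=\sigma_{\pi_{y'}}\circ\tau_u$ for some $\pi_{y'}\in \mathrm{Rot}_{y'}(C)$ and some $u\in F^n$ such that for every $y\in C$ $$\lambda(y')+\lambda(y)+\lambda(y'+\pi_{y'}(y))=u\cdot y,$$ where $u\cdot y$ is the scalar product over $\mathbb{F}_2$.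
   Context: $F^n$ is the space of binary vectors of length $n$ with the Hamming metric. A binary code $C\subseteq F^n$ is perfect (1-error-correcting) if every $x\in F^n$ is at distance at most one from exactly one codeword. Permutations $\pi\in S_n$ act on vectors by permuting coordinates. For a code $D$ of length $m$ and a vector $z$, $\mathrm{Rot}_z(D)=\{\pi\in S_m\mid z+\pi(D)=D\}$, and $St_{i}(\mathrm{Rot}_z(D))$ denotes the set of permutations in $\mathrm{Rot}_z(D)$ fixing the coordinate $i$. For $i\in\{1,\dots,n\}$ let $t_i$ be the transposition of coordinates $i$ and $i+n+1$ in $S_{2n+1}$, and for $u\in F^n$ let $\tau_u=\prod_{i\in \mathrm{supp}(u)}t_i$. For $\pi\in S_n$ the duplicator $\sigma_\pi\in S_{2n+1}$ maps $i\mapsto\pi(i)$ and $i+n+1\mapsto \pi(i)+n+1$ for $1\le i\le n$, and fixes $n+1$. Composition $\sigma\circ\tau$ means $\tau$ is applied first. *)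

theory Defs
  imports "HOL-Combinatorics.Permutations" "HOL-Combinatorics.Transposition"
begin

(* Binary vectors of length n are represented by their supports: subsets of {1..n}. *)
definition vecs :: "nat \<Rightarrow> nat set set" where
  "vecs n = Pow {1..n}"

(* addition over F_2 = symmetric difference of supports *)
definition vadd :: "nat set \<Rightarrow> nat set \<Rightarrow> nat set" where
  "vadd x y = (x - y) \<union> (y - x)"

definition hdist :: "nat set \<Rightarrow> nat set \<Rightarrow> nat" where
  "hdist x y = card (vadd x y)"

definition perfect_code :: "nat \<Rightarrow> nat set set \<Rightarrow> bool" where
  "perfect_code n C \<longleftrightarrow> C \<subseteq> vecs n \<and>
     (\<forall>x \<in> vecs n. \<exists>!c. c \<in> C \<and> hdist x c \<le> 1)"

definition pact :: "(nat \<Rightarrow> nat) \<Rightarrow> nat set \<Rightarrow> nat set" where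
  "pact p x = p ` x"

definition Rot :: "nat \<Rightarrow> nat set \<Rightarrow> nat set set \<Rightarrow> (nat \<Rightarrow> nat) set" where
  "Rot m z D = {p. p permutes {1..m} \<and> (\<lambda>d. vadd z (pact p d)) ` D = D}"

definition St :: "nat \<Rightarrow> (nat \<Rightarrow> nat) set \<Rightarrow> (nat \<Rightarrow> nat) set" where
  "St i R = {p \<in> R. p i = i}"

definition wpar :: "nat set \<Rightarrow> bool" where
  "wpar x = odd (card x)"

definition sprod :: "nat set \<Rightarrow> nat set \<Rightarrow> bool" where
  "sprod u y = odd (card (u \<inter> y))"

(* concatenation (a, b, c) in F^{2n+1}, a,c in F^n, b a bit *)
definition concat3 :: "nat \<Rightarrow> nat set \<Rightarrow> bool \<Rightarrow> nat set \<Rightarrow> nat set" where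
  "concat3 n a b c = a \<union> (if b then {n+1} else {}) \<union> ((\<lambda>i. i + n + 1) ` c)"

definition vasilev :: "nat \<Rightarrow> nat set set \<Rightarrow> (nat set \<Rightarrow> bool) \<Rightarrow> nat set set" where
  "vasilev n C lam = {concat3 n (vadd x y) (wpar x \<noteq> lam y) x | x y. x \<in> vecs n \<and> y \<in> C}"

definition tt :: "nat \<Rightarrow> nat \<Rightarrow> nat \<Rightarrow> nat" where
  "tt n i = Transposition.transpose i (i + n + 1)"

(* tau_u = product of t_i over i in supp u (they commute) *)
definition tau :: "nat \<Rightarrow> nat set \<Rightarrow> nat \<Rightarrow> nat" where
  "tau n u = foldr (\<lambda>i f. tt n i \<circ> f) (sorted_list_of_set u) id"

definition sigma :: "nat \<Rightarrow> (nat \<Rightarrow> nat) \<Rightarrow> nat \<Rightarrow> nat" where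
  "sigma n p j = (if 1 \<le> j \<and> j \<le> n then p j
                 else if n + 2 \<le> j \<and> j \<le> 2 * n + 1 then p (j - (n + 1)) + n + 1
                 else j)"

end

theory Submission
  imports Defs
begin


lemma vadd_comm: "vadd x y = vadd y x" by (auto simp: vadd_def)
lemma vadd_assoc: "vadd (vadd x y) z = vadd x (vadd y z)" by (auto simp: vadd_def)
lemma vadd_self[simp]: "vadd x x = {}" by (auto simp: vadd_def)
lemma vadd_empty[simp]: "vadd x {} = x" "vadd {} x = x" by (auto simp: vadd_def)
lemma vadd_cancel[simp]: "vadd x (vadd x y) = y" by (auto simp: vadd_def)
lemma wpar_vadd: "finite a \<Longrightarrow> finite b \<Longrightarrow> wpar (vadd a b) = (wpar a \<noteq> wpar b)"
proof -
  assume f: "finite a" "finite b"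
  have 1: "card (vadd a b) = card (a - b) + card (b - a)"
    unfolding vadd_def using f by (subst card_Un_disjoint) auto
  have 2: "card a = card (a - b) + card (a \<inter> b)" using f
    using f card_Int_Diff[of a b] by simp
  have 3: "card b = card (b - a) + card (a \<inter> b)" using f
    using f card_Int_Diff[of b a] by (simp add: Int_commute)
  show ?thesis unfolding wpar_def using 1 2 3 by auto
qed
lemma concat3_sub: "a \<subseteq> {1..n} \<Longrightarrow> c \<subseteq> {1..n} \<Longrightarrow> concat3 n a b c \<subseteq> {1..2*n+1}"
  by (auto simp: concat3_def)
lemma concat3_vadd: "a1 \<subseteq> {1..n} \<Longrightarrow> c1 \<subseteq> {1..n} \<Longrightarrow> a2 \<subseteq> {1..n} \<Longrightarrow> c2 \<subseteq> {1..n} \<Longrightarrow>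
  vadd (concat3 n a1 b1 c1) (concat3 n a2 b2 c2) = concat3 n (vadd a1 a2) (b1 \<noteq> b2) (vadd c1 c2)"
  by (auto simp: concat3_def vadd_def)
lemma concat3_card: "a \<subseteq> {1..n} \<Longrightarrow> c \<subseteq> {1..n} \<Longrightarrow>
  card (concat3 n a b c) = card a + (if b then 1 else 0) + card c"
proof -
  assume s: "a \<subseteq> {1..n}" "c \<subseteq> {1..n}"
  hence f: "finite a" "finite c" by (auto intro: finite_subset)
  have "card (concat3 n a b c) = card (a \<union> (if b then {n+1} else {})) + card ((\<lambda>i. i + n + 1) ` c)"
    unfolding concat3_def using s f by (subst card_Un_disjoint) auto
  also have "card ((\<lambda>i. i + n + 1) ` c) = card c" by (rule card_image) (auto simp: inj_on_def)
  also have "card (a \<union> (if b then {n+1} else {})) = card a + (if b then 1 else 0)"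
    using s f by (subst card_Un_disjoint) auto
  finally show ?thesis .
qed
lemma concat3_inj: "a \<subseteq> {1..n} \<Longrightarrow> c \<subseteq> {1..n} \<Longrightarrow> a' \<subseteq> {1..n} \<Longrightarrow> c' \<subseteq> {1..n} \<Longrightarrow>
  concat3 n a b c = concat3 n a' b' c' \<Longrightarrow> a = a' \<and> b = b' \<and> c = c'"
proof -
  assume s: "a \<subseteq> {1..n}" "c \<subseteq> {1..n}" "a' \<subseteq> {1..n}" "c' \<subseteq> {1..n}" and e: "concat3 n a b c = concat3 n a' b' c'"
  have A: "\<And>a b c. a \<subseteq> {1..n} \<Longrightarrow> c \<subseteq> {1..n} \<Longrightarrow> a = concat3 n a b c \<inter> {1..n}"
    by (auto simp: concat3_def)
  have B: "\<And>a b c. a \<subseteq> {1..n} \<Longrightarrow> c \<subseteq> {1..n} \<Longrightarrow> b = (n+1 \<in> concat3 n a b c)"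
    by (auto simp: concat3_def)
  have C: "\<And>a b c. a \<subseteq> {1..n} \<Longrightarrow> c \<subseteq> {1..n} \<Longrightarrow> c = {i\<in>{1..n}. i+n+1 \<in> concat3 n a b c}"
    by (auto simp: concat3_def)
  have "a = a'" using A[OF s(1,2), of b] A[OF s(3,4), of b'] e by simp
  moreover have "b = b'" using B[OF s(1,2), of b] B[OF s(3,4), of b'] e by simp
  moreover have "c = c'" using C[OF s(1,2), of b] C[OF s(3,4), of b'] e by simp
  ultimately show ?thesis by simp
qed
definition swp :: "nat \<Rightarrow> nat set \<Rightarrow> nat \<Rightarrow> nat" where
  "swp n U j = (if j \<in> U then j+n+1 else if n+1 < j \<and> j-(n+1) \<in> U then j-(n+1) else j)"
lemma swp_invol: "u \<subseteq> {1..n} \<Longrightarrow> swp n u (swp n u j) = j"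
  by (auto simp: swp_def)

lemma swp_image: "u \<subseteq> {1..n} \<Longrightarrow> swp n u ` S = {j. swp n u j \<in> S}"
proof
  assume u: "u \<subseteq> {1..n}"
  show "swp n u ` S \<subseteq> {j. swp n u j \<in> S}" using swp_invol[OF u] by auto
  show "{j. swp n u j \<in> S} \<subseteq> swp n u ` S"
  proof
    fix j assume "j \<in> {j. swp n u j \<in> S}"
    thus "j \<in> swp n u ` S" using swp_invol[OF u, of j] by (metis image_eqI mem_Collect_eq)
  qed
qed

lemma mem_shift: "(j::nat) \<in> (\<lambda>i. i + n + 1) ` c \<longleftrightarrow> (n+1 \<le> j \<and> j - (n+1) \<in> c)"
proof
  assume "j \<in> (\<lambda>i. i + n + 1) ` c" then obtain i where "i \<in> c" "j = i + n + 1" by blast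
  thus "n+1 \<le> j \<and> j - (n+1) \<in> c" by simp
next
  assume "n+1 \<le> j \<and> j - (n+1) \<in> c"
  hence "j = (j - (n+1)) + n + 1" "j - (n+1) \<in> c" by auto
  thus "j \<in> (\<lambda>i. i + n + 1) ` c" by (metis image_eqI)
qed

lemma mem_concat3: assumes "a \<subseteq> {1..n}" "c \<subseteq> {1..n}" shows
  "j \<in> concat3 n a b c \<longleftrightarrow> (j \<le> n \<and> j \<in> a) \<or> (j = n+1 \<and> b) \<or> (n+1 < j \<and> j - (n+1) \<in> c)"
proof -
  have "j \<in> a \<longleftrightarrow> j \<le> n \<and> j \<in> a" using assms by auto
  moreover have "n+1 \<le> j \<and> j - (n+1) \<in> c \<longleftrightarrow> n+1 < j \<and> j - (n+1) \<in> c" using assms(2)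
    by (metis atLeastAtMost_iff diff_self_eq_0 le_less not_one_le_zero subsetD)
  ultimately show ?thesis by (simp only: concat3_def Un_iff mem_shift) auto
qed
lemma swp_concat: assumes u: "u \<subseteq> {1..n}" and a: "a \<subseteq> {1..n}" and c: "c \<subseteq> {1..n}"
  shows "swp n u ` concat3 n a b c = concat3 n ((a-u) \<union> (c\<inter>u)) b ((c-u) \<union> (a\<inter>u))"
proof -
  have s1: "(a-u) \<union> (c\<inter>u) \<subseteq> {1..n}" "(c-u) \<union> (a\<inter>u) \<subseteq> {1..n}" using a c u by auto
  have U: "\<forall>v\<in>u. 1 \<le> v \<and> v \<le> n" "\<forall>v\<in>a. 1 \<le> v \<and> v \<le> n" "\<forall>v\<in>c. 1 \<le> v \<and> v \<le> n" using u a c by auto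
  have "{j. swp n u j \<in> concat3 n a b c} = concat3 n ((a-u) \<union> (c\<inter>u)) b ((c-u) \<union> (a\<inter>u))"
  proof (rule set_eqI)
    fix j
    show "j \<in> {j. swp n u j \<in> concat3 n a b c} \<longleftrightarrow> j \<in> concat3 n ((a-u) \<union> (c\<inter>u)) b ((c-u) \<union> (a\<inter>u))"
      unfolding mem_Collect_eq mem_concat3[OF a c] mem_concat3[OF s1]
    proof (cases "j \<in> u")
      case True
      hence "swp n u j = j + n + 1" "j \<le> n" "1 \<le> j" using U by (auto simp: swp_def)
      then show "(swp n u j \<le> n \<and> swp n u j \<in> a \<or> swp n u j = n + 1 \<and> b \<or> n + 1 < swp n u j \<and> swp n u j - (n + 1) \<in> c) =
    (j \<le> n \<and> j \<in> a - u \<union> c \<inter> u \<or> j = n + 1 \<and> b \<or> n + 1 < j \<and> j - (n + 1) \<in> c - u \<union> a \<inter> u)"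
        using True by simp
    next
      case F: False
      show "(swp n u j \<le> n \<and> swp n u j \<in> a \<or> swp n u j = n + 1 \<and> b \<or> n + 1 < swp n u j \<and> swp n u j - (n + 1) \<in> c) =
    (j \<le> n \<and> j \<in> a - u \<union> c \<inter> u \<or> j = n + 1 \<and> b \<or> n + 1 < j \<and> j - (n + 1) \<in> c - u \<union> a \<inter> u)"
      proof (cases "n+1 < j \<and> j-(n+1) \<in> u")
        case True
        hence "swp n u j = j - (n+1)" "j - (n+1) \<le> n" "1 \<le> j - (n+1)" using U F by (auto simp: swp_def)
        then show ?thesis using True F by auto
      next
        case False
        hence "swp n u j = j" using F by (auto simp: swp_def)
        then show ?thesis using False F by auto
      qed
    qed
  qed
  thus ?thesis using swp_image[OF u] by simp
qed

lemma perm_of_inj: "finite S \<Longrightarrow> f ` S \<subseteq> S \<Longrightarrow> inj_on f S \<Longrightarrow> (\<And>x. x \<notin> S \<Longrightarrow> f x = x) \<Longrightarrow> f permutes S"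
  apply (rule bij_imp_permutes)
   apply (simp add: bij_betw_def endo_inj_surj)
  by simp
lemma swp_step: assumes "a \<notin> U" "1 \<le> a" "a \<le> n" "\<forall>v\<in>U. 1 \<le> v \<and> v \<le> n"
  shows "transpose a (a+n+1) (swp n U j) = swp n (insert a U) j"
proof (cases "j \<in> U")
  case True
  then show ?thesis using assms by (auto simp: swp_def transpose_def)
next
  case F: False
  show ?thesis
  proof (cases "n+1 < j \<and> j-(n+1) \<in> U")
    case True
    then show ?thesis using assms F by (auto simp: swp_def transpose_def)
  next
    case False
    then show ?thesis using assms F by (auto simp: swp_def transpose_def)
  qed
qed

lemma tau_list: "distinct xs \<Longrightarrow> set xs \<subseteq> {1..n} \<Longrightarrow> foldr (\<lambda>i f. tt n i \<circ> f) xs id = swp n (set xs)"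
proof (induction xs)
  case Nil
  then show ?case by (auto simp: swp_def fun_eq_iff)
next
  case (Cons a xs)
  have U: "\<forall>v\<in>set xs. 1 \<le> v \<and> v \<le> n" using Cons.prems by auto
  have "(\<lambda>b. tt n a (swp n (set xs) b)) = swp n (insert a (set xs))"
    unfolding tt_def fun_eq_iff using swp_step[of a "set xs" n] Cons.prems U by auto
  then show ?case using Cons by (simp add: comp_def)
qed

lemma tau_eq: "u \<subseteq> {1..n} \<Longrightarrow> tau n u = swp n u"
proof -
  assume u: "u \<subseteq> {1..n}"
  hence "finite u" by (rule finite_subset) simp
  thus ?thesis unfolding tau_def using u by (subst tau_list) auto
qed

lemma sigma_concat: "p permutes {1..n} \<Longrightarrow> a \<subseteq> {1..n} \<Longrightarrow> c \<subseteq> {1..n} \<Longrightarrow>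
  sigma n p ` concat3 n a b c = concat3 n (p`a) b (p`c)"
proof -
  assume p: "p permutes {1..n}" and a: "a \<subseteq> {1..n}" and c: "c \<subseteq> {1..n}"
  have 1: "sigma n p ` a = p ` a" using a by (intro image_cong) (auto simp: sigma_def)
  have 2: "sigma n p ` (if b then {n+1} else {}) = (if b then {n+1} else {})" by (auto simp: sigma_def)
  have 3: "sigma n p ` ((\<lambda>i. i + n + 1) ` c) = (\<lambda>i. i + n + 1) ` (p ` c)"
    unfolding image_comp using c by (intro image_cong) (auto simp: sigma_def)
  show ?thesis unfolding concat3_def image_Un 1 2 3 ..
qed

lemma perm_im: "p permutes {1..n} \<Longrightarrow> x \<in> {1..n} \<Longrightarrow> p x \<in> {1..(n::nat)}"
  by (metis permutes_in_image)

lemma sigma_permutes: "p permutes {1..n} \<Longrightarrow> sigma n p permutes {1..2*n+1}"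
proof (rule perm_of_inj)
  assume p: "p permutes {1..n}"
  have im: "\<And>x. 1 \<le> x \<Longrightarrow> x \<le> n \<Longrightarrow> 1 \<le> p x \<and> p x \<le> n" using perm_im[OF p] by auto
  have inj: "\<And>x y. p x = p y \<Longrightarrow> x = y" using permutes_inj[OF p] by (simp add: inj_eq)
  show "sigma n p ` {1..2*n+1} \<subseteq> {1..2*n+1}"
  proof
    fix y assume "y \<in> sigma n p ` {1..2*n+1}"
    then obtain x where x: "x \<in> {1..2*n+1}" "y = sigma n p x" by auto
    show "y \<in> {1..2*n+1}"
    proof (cases "x \<le> n")
      case True thus ?thesis using x im[of x] by (auto simp: sigma_def)
    next
      case False thus ?thesis using x im[of "x - (n+1)"] by (auto simp: sigma_def)
    qed
  qed
  have cls: "\<And>x. x \<in> {1..2*n+1} \<Longrightarrow> (1 \<le> x \<and> x \<le> n \<and> sigma n p x = p x \<and> 1 \<le> p x \<and> p x \<le> n) \<or>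
     (x = n+1 \<and> sigma n p x = n+1) \<or> (n+2 \<le> x \<and> x \<le> 2*n+1 \<and> sigma n p x = p (x - (n+1)) + n + 1
      \<and> 1 \<le> p (x - (n+1)) \<and> p (x - (n+1)) \<le> n)"
  proof -
    fix x assume x: "x \<in> {1..2*n+1}"
    show "?thesis x"
    proof (cases "x \<le> n")
      case True thus ?thesis using x im[of x] by (auto simp: sigma_def)
    next
      case False
      show ?thesis
      proof (cases "x = n+1")
        case True thus ?thesis by (auto simp: sigma_def)
      next
        case F2: False
        hence "n+2 \<le> x" "1 \<le> x - (n+1)" "x - (n+1) \<le> n" using False x by auto
        thus ?thesis using x im[of "x - (n+1)"] by (auto simp: sigma_def)
      qed
    qed
  qed
  show "inj_on (sigma n p) {1..2*n+1}"
  proof (rule inj_onI)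
    fix x y assume x: "x \<in> {1..2*n+1}" and y: "y \<in> {1..2*n+1}" and e: "sigma n p x = sigma n p y"
    have "x - (n+1) = y - (n+1) \<Longrightarrow> n+2 \<le> x \<Longrightarrow> n+2 \<le> y \<Longrightarrow> x = y" by simp
    thus "x = y" using cls[OF x] cls[OF y] e inj[of x y] inj[of "x-(n+1)" "y-(n+1)"] by auto
  qed
qed (auto simp: sigma_def)

lemma swp_permutes: "u \<subseteq> {1..n} \<Longrightarrow> swp n u permutes {1..2*n+1}"
proof (rule perm_of_inj)
  assume u: "u \<subseteq> {1..n}"
  have U: "\<forall>v\<in>u. 1 \<le> v \<and> v \<le> n" using u by auto
  show "swp n u ` {1..2*n+1} \<subseteq> {1..2*n+1}" using U by (auto simp: swp_def)
  show "inj_on (swp n u) {1..2*n+1}" by (metis inj_onI swp_invol[OF u])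
  show "\<And>x. x \<notin> {1..2*n+1} \<Longrightarrow> swp n u x = x" using U by (auto simp: swp_def)
qed simp



lemma vecs_iff: "x \<in> vecs n \<longleftrightarrow> x \<subseteq> {1..n}" by (simp add: vecs_def)

lemma vadd_sub: "a \<subseteq> {1..n} \<Longrightarrow> b \<subseteq> {1..n} \<Longrightarrow> vadd a b \<subseteq> {1..(n::nat)}"
  by (auto simp: vadd_def)

lemma image_vadd: "inj p \<Longrightarrow> p ` vadd a b = vadd (p ` a) (p ` b)"
  by (auto simp: vadd_def image_set_diff image_Un)

lemma perm_sub: "p permutes {1..n} \<Longrightarrow> a \<subseteq> {1..n} \<Longrightarrow> p ` a \<subseteq> {1..(n::nat)}"
  using perm_im by blast

lemma act:
  assumes p: "p permutes {1..n}" and u: "u \<subseteq> {1..n}" and x: "x \<subseteq> {1..n}" and y: "y \<subseteq> {1..n}"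
    and y': "y' \<subseteq> {1..n}"
  shows "vadd (concat3 n y' l {}) (pact (sigma n p \<circ> tau n u) (concat3 n (vadd x y) b x))
    = concat3 n (vadd (p ` vadd x (y \<inter> u)) (vadd y' (p ` y))) (b \<noteq> l) (p ` vadd x (y \<inter> u))"
proof -
  define x' where "x' = vadd x (y \<inter> u)"
  have x's: "x' \<subseteq> {1..n}" unfolding x'_def using x y by (auto simp: vadd_def)
  have xy: "vadd x y \<subseteq> {1..n}" using x y by (rule vadd_sub)
  have e1: "(vadd x y - u) \<union> (x \<inter> u) = vadd x' y" unfolding x'_def by (auto simp: vadd_def)
  have e2: "(x - u) \<union> (vadd x y \<inter> u) = x'" unfolding x'_def by (auto simp: vadd_def)
  have "pact (sigma n p \<circ> tau n u) (concat3 n (vadd x y) b x) = sigma n p ` (swp n u ` concat3 n (vadd x y) b x)"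
    unfolding pact_def tau_eq[OF u] image_comp ..
  also have "\<dots> = sigma n p ` concat3 n (vadd x' y) b x'"
    using swp_concat[OF u xy x] e1 e2 by simp
  also have "\<dots> = concat3 n (p ` vadd x' y) b (p ` x')"
    using sigma_concat[OF p vadd_sub[OF x's y] x's] .
  also have "p ` vadd x' y = vadd (p ` x') (p ` y)" using image_vadd permutes_inj[OF p] by blast
  finally have 1: "pact (sigma n p \<circ> tau n u) (concat3 n (vadd x y) b x) = concat3 n (vadd (p ` x') (p ` y)) b (p ` x')" .
  have s: "p ` x' \<subseteq> {1..n}" "p ` y \<subseteq> {1..n}" using perm_sub[OF p] x's y by auto
  have "vadd (concat3 n y' l {}) (concat3 n (vadd (p ` x') (p ` y)) b (p ` x'))
     = concat3 n (vadd y' (vadd (p ` x') (p ` y))) (l \<noteq> b) (vadd {} (p ` x'))"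
    by (rule concat3_vadd) (use y' s vadd_sub in auto)
  also have "vadd y' (vadd (p ` x') (p ` y)) = vadd (p ` x') (vadd y' (p ` y))" by (auto simp: vadd_def)
  also have "vadd {} (p ` x') = p ` x'" by simp
  finally have E: "vadd (concat3 n y' l {}) (concat3 n (vadd (p ` x') (p ` y)) b (p ` x'))
     = concat3 n (vadd (p ` x') (vadd y' (p ` y))) (l \<noteq> b) (p ` x')" .
  show ?thesis using E unfolding 1 x'_def by (cases b; cases l) auto
qed

lemma code_dist:
  assumes C: "perfect_code n C" and y1: "y1 \<in> C" and y2: "y2 \<in> C" and ne: "y1 \<noteq> y2"
  shows "3 \<le> card (vadd y1 y2)"
proof (rule ccontr)
  assume "\<not> 3 \<le> card (vadd y1 y2)"
  hence c2: "card (vadd y1 y2) \<le> 2" by simp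
  have sub: "C \<subseteq> vecs n" and uq: "\<forall>x \<in> vecs n. \<exists>!c. c \<in> C \<and> hdist x c \<le> 1" using C by (auto simp: perfect_code_def)
  have s1: "y1 \<subseteq> {1..n}" "y2 \<subseteq> {1..n}" using subsetD[OF sub y1] subsetD[OF sub y2] unfolding vecs_iff by auto
  define D where "D = vadd y1 y2"
  have Ds: "D \<subseteq> {1..n}" unfolding D_def using s1 by (rule vadd_sub)
  hence Df: "finite D" by (rule finite_subset) simp
  have "D \<noteq> {}" unfolding D_def using ne by (auto simp: vadd_def)
  then obtain a where a: "a \<in> D" by blast
  define x where "x = vadd y1 {a}"
  have xv: "x \<in> vecs n" unfolding x_def vecs_iff using s1 a Ds by (auto simp: vadd_def)
  have "vadd (vadd y1 {a}) y1 = {a}" by (auto simp: vadd_def)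
  hence "hdist x y1 = 1" unfolding hdist_def x_def by simp
  moreover have "vadd x y2 = D - {a}" unfolding x_def D_def using a unfolding D_def by (auto simp: vadd_def)
  hence "hdist x y2 \<le> 1" unfolding hdist_def using c2 Df a unfolding D_def by simp
  ultimately show False using uq xv y1 y2 ne by (metis le_refl)
qed

lemma mindist:
  assumes C: "perfect_code n C" and v1: "v1 \<in> vasilev n C lam" and v2: "v2 \<in> vasilev n C lam"
  shows "card (vadd v1 v2) \<noteq> 2"
proof -
  have sub: "C \<subseteq> vecs n" using C by (auto simp: perfect_code_def)
  obtain x1 y1 where 1: "v1 = concat3 n (vadd x1 y1) (wpar x1 \<noteq> lam y1) x1" "x1 \<subseteq> {1..n}" "y1 \<in> C"
    using v1 by (auto simp: vasilev_def vecs_iff)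
  obtain x2 y2 where 2: "v2 = concat3 n (vadd x2 y2) (wpar x2 \<noteq> lam y2) x2" "x2 \<subseteq> {1..n}" "y2 \<in> C"
    using v2 by (auto simp: vasilev_def vecs_iff)
  have ys: "y1 \<subseteq> {1..n}" "y2 \<subseteq> {1..n}" using subsetD[OF sub 1(3)] subsetD[OF sub 2(3)] unfolding vecs_iff by auto
  define X where "X = vadd x1 x2"
  define Y where "Y = vadd y1 y2"
  define A where "A = vadd X Y"
  define b where "b = ((wpar x1 \<noteq> lam y1) \<noteq> (wpar x2 \<noteq> lam y2))"
  have Xs: "X \<subseteq> {1..n}" unfolding X_def using 1 2 by (intro vadd_sub)
  have Ys: "Y \<subseteq> {1..n}" unfolding Y_def using ys by (intro vadd_sub)
  have As: "A \<subseteq> {1..n}" unfolding A_def using Xs Ys by (intro vadd_sub)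
  have "vadd v1 v2 = concat3 n (vadd (vadd x1 y1) (vadd x2 y2)) b X"
    unfolding 1 2 X_def b_def by (rule concat3_vadd) (use 1 2 ys vadd_sub in auto)
  also have "vadd (vadd x1 y1) (vadd x2 y2) = A" unfolding A_def X_def Y_def by (auto simp: vadd_def)
  finally have "card (vadd v1 v2) = card A + (if b then 1 else 0) + card X"
    using concat3_card[OF As Xs] by simp
  moreover have fX: "finite X" "finite A" "finite Y" using Xs As Ys by (auto intro: finite_subset)
  moreover have "y1 = y2 \<Longrightarrow> card A + (if b then 1 else 0) + card X \<noteq> 2"
  proof -
    assume e: "y1 = y2"
    hence "A = X" unfolding A_def Y_def by simp
    moreover have "b = wpar X" unfolding b_def X_def using wpar_vadd[of x1 x2] 1 2 e
      by (auto intro: finite_subset)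
    ultimately show ?thesis unfolding wpar_def apply auto by presburger
  qed
  moreover have "y1 \<noteq> y2 \<Longrightarrow> 3 \<le> card A + card X"
  proof -
    assume ne: "y1 \<noteq> y2"
    have "3 \<le> card Y" unfolding Y_def by (rule code_dist[OF C 1(3) 2(3) ne])
    also have "Y \<subseteq> A \<union> X" unfolding A_def by (auto simp: vadd_def)
    hence "card Y \<le> card (A \<union> X)" using fX by (intro card_mono) auto
    also have "\<dots> \<le> card A + card X" by (rule card_Un_le)
    finally show ?thesis .
  qed
  ultimately show ?thesis by fastforce
qed



lemma swp_np1: "u \<subseteq> {1..n} \<Longrightarrow> swp n u (n+1) = n+1" by (auto simp: swp_def)
lemma sigma_np1: "sigma n p (Suc n) = Suc n" by (simp add: sigma_def)

lemma C_sub: "perfect_code n C \<Longrightarrow> y \<in> C \<Longrightarrow> y \<subseteq> {1..n}"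
  unfolding perfect_code_def vecs_iff[symmetric] by blast

lemma C_fin: "perfect_code n C \<Longrightarrow> finite C"
  unfolding perfect_code_def vecs_def by (meson finite_Pow_iff finite_atLeastAtMost finite_subset)

lemma vas_mem: "x \<subseteq> {1..n} \<Longrightarrow> y \<in> C \<Longrightarrow> concat3 n (vadd x y) (wpar x \<noteq> lam y) x \<in> vasilev n C lam"
  unfolding vasilev_def vecs_iff by blast

lemma vas_fin: assumes C: "perfect_code n C" shows "finite (vasilev n C lam)"
proof -
  have "vasilev n C lam \<subseteq> Pow {1..2*n+1}"
  proof
    fix v assume "v \<in> vasilev n C lam"
    then obtain x y where xy: "v = concat3 n (vadd x y) (wpar x \<noteq> lam y) x" "x \<subseteq> {1..n}" "y \<in> C"
      unfolding vasilev_def vecs_iff by blast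
    have ys: "y \<subseteq> {1..n}" using C_sub[OF C xy(3)] .
    show "v \<in> Pow {1..2*n+1}" using concat3_sub[OF vadd_sub[OF xy(2) ys] xy(2)] xy(1) by simp
  qed
  thus ?thesis by (rule finite_subset) simp
qed

lemma wpar_img: "inj p \<Longrightarrow> wpar (p ` x) = wpar x"
  unfolding wpar_def by (simp add: card_image inj_on_subset)

lemma sprod_wpar: "sprod u y = wpar (y \<inter> u)"
  unfolding sprod_def wpar_def by (simp add: Int_commute)

lemma back_dir:
  assumes C: "perfect_code n C" and y': "y' \<in> C"
    and p: "p \<in> Rot n y' C" and u: "u \<in> vecs n"
    and cond: "\<forall>y\<in>C. ((lam y' \<noteq> lam y) \<noteq> lam (vadd y' (pact p y))) = sprod u y"
  shows "sigma n p \<circ> tau n u \<in> St (n+1) (Rot (2*n+1) (concat3 n y' (lam y') {}) (vasilev n C lam))"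
proof -
  have pp: "p permutes {1..n}" and pC: "(\<lambda>d. vadd y' (pact p d)) ` C = C" using p by (auto simp: Rot_def)
  have us: "u \<subseteq> {1..n}" using u by (simp add: vecs_iff)
  have y's: "y' \<subseteq> {1..n}" using C_sub[OF C y'] .
  define rho where "rho = sigma n p \<circ> tau n u"
  have rp: "rho permutes {1..2*n+1}" unfolding rho_def tau_eq[OF us]
    by (rule permutes_compose[OF swp_permutes[OF us] sigma_permutes[OF pp]])
  have r1: "rho (n+1) = n+1" unfolding rho_def tau_eq[OF us] using swp_np1[OF us] by (simp add: sigma_np1)
  define z where "z = concat3 n y' (lam y') {}"
  define V where "V = vasilev n C lam"
  define f where "f = (\<lambda>d. vadd z (pact rho d))"
  have sub: "f ` V \<subseteq> V"
  proof
    fix w assume "w \<in> f ` V"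
    then obtain v where v: "v \<in> V" "w = f v" by auto
    then obtain x y where xy: "v = concat3 n (vadd x y) (wpar x \<noteq> lam y) x" "x \<subseteq> {1..n}" "y \<in> C"
      unfolding V_def vasilev_def vecs_iff by blast
    have ys: "y \<subseteq> {1..n}" using C_sub[OF C xy(3)] .
    define x' where "x' = vadd x (y \<inter> u)"
    have x's: "x' \<subseteq> {1..n}" unfolding x'_def using xy(2) ys by (auto simp: vadd_def)
    define X where "X = p ` x'"
    define Y where "Y = vadd y' (p ` y)"
    have Xs: "X \<subseteq> {1..n}" unfolding X_def using perm_sub[OF pp x's] .
    have YC: "Y \<in> C" unfolding Y_def using pC xy(3) unfolding pact_def by blast
    have w: "w = concat3 n (vadd X Y) ((wpar x \<noteq> lam y) \<noteq> lam y') X"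
      unfolding v(2) f_def z_def rho_def xy(1) X_def Y_def x'_def by (rule act[OF pp us xy(2) ys y's])
    have fx: "finite x" "finite (y \<inter> u)" "finite x'" using xy(2) ys x's by (auto intro: finite_subset)
    have "wpar X = wpar x'" unfolding X_def using wpar_img permutes_inj[OF pp] by blast
    also have "wpar x' = (wpar x \<noteq> sprod u y)" unfolding x'_def sprod_wpar using wpar_vadd fx by blast
    finally have wX: "wpar X = (wpar x \<noteq> sprod u y)" .
    have lY: "lam Y = ((lam y' \<noteq> lam y) \<noteq> sprod u y)" using cond xy(3) unfolding Y_def pact_def by auto
    have "((wpar x \<noteq> lam y) \<noteq> lam y') = (wpar X \<noteq> lam Y)" using wX lY by auto
    hence "w = concat3 n (vadd X Y) (wpar X \<noteq> lam Y) X" using w by simp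
    thus "w \<in> V" unfolding V_def using vas_mem[OF Xs YC] by simp
  qed
  have inj: "inj_on f V"
  proof (rule inj_onI)
    fix a b assume "f a = f b"
    hence "vadd z (vadd z (pact rho a)) = vadd z (vadd z (pact rho b))" unfolding f_def by simp
    hence "rho ` a = rho ` b" unfolding pact_def by simp
    thus "a = b" using permutes_inj[OF rp] by (simp add: inj_image_eq_iff)
  qed
  have fin: "finite V" unfolding V_def by (rule vas_fin[OF C])
  have "f ` V = V" using endo_inj_surj[OF fin sub inj] .
  thus ?thesis using rp r1 unfolding St_def Rot_def rho_def f_def z_def V_def by auto
qed



lemma fwd_dir:
  assumes C: "perfect_code n C" and y': "y' \<in> C" and l0: "\<not> lam {}" and e0: "{} \<in> C"
    and r: "rho \<in> St (n+1) (Rot (2*n+1) (concat3 n y' (lam y') {}) (vasilev n C lam))"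
  shows "\<exists>p \<in> Rot n y' C. \<exists>u \<in> vecs n. rho = sigma n p \<circ> tau n u \<and>
            (\<forall>y \<in> C. (lam y' \<noteq> lam y) \<noteq> lam (vadd y' (pact p y)) \<longleftrightarrow> sprod u y)"
proof -
  define z where "z = concat3 n y' (lam y') {}"
  define V where "V = vasilev n C lam"
  define f where "f = (\<lambda>d. vadd z (pact rho d))"
  have rp: "rho permutes {1..2*n+1}" and r1: "rho (n+1) = n+1" and rV: "f ` V = V"
    using r unfolding St_def Rot_def f_def z_def V_def by auto
  have fV: "\<And>v. v \<in> V \<Longrightarrow> f v \<in> V" using rV by blast
  have y's: "y' \<subseteq> {1..n}" using C_sub[OF C y'] .
  have rin: "\<And>j. j \<in> {1..2*n+1} \<Longrightarrow> rho j \<in> {1..2*n+1}" using rp by (metis permutes_in_image)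
  have rinj: "\<And>a b. rho a = rho b \<Longrightarrow> a = b" using permutes_inj[OF rp] by (simp add: inj_eq)
  have rout: "\<And>j. j \<notin> {1..2*n+1} \<Longrightarrow> rho j = j" using rp by (metis permutes_not_in)
  define par where "par = (\<lambda>j::nat. if j \<le> n then j + n + 1 else j - (n+1))"
  have A: "\<And>i. 1 \<le> i \<Longrightarrow> i \<le> n \<Longrightarrow> rho (i+n+1) = par (rho i)"
  proof -
    fix i assume i: "1 \<le> i" "i \<le> n"
    define vi where "vi = concat3 n {i} True {i}"
    have "concat3 n (vadd {i} {}) (wpar {i} \<noteq> lam {}) {i} \<in> V"
      unfolding V_def by (rule vas_mem) (use i e0 in auto)
    hence viV: "vi \<in> V" unfolding vi_def using l0 by (simp add: wpar_def)
    have vi_eq: "vi = {i, n+1, i+n+1}" unfolding vi_def concat3_def by auto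
    define j where "j = rho i"
    define k where "k = rho (i+n+1)"
    have P: "pact rho vi = {j, n+1, k}" unfolding pact_def vi_eq j_def k_def using r1 by auto
    have jS: "1 \<le> j" "j \<le> 2*n+1" using rin[of i] i unfolding j_def by auto
    have jn: "j \<noteq> n+1" using rinj[of i "n+1"] r1 i unfolding j_def by auto
    have kj: "k \<noteq> j" using rinj[of "i+n+1" i] unfolding j_def k_def by auto
    have kn: "k \<noteq> n+1" using rinj[of "i+n+1" "n+1"] r1 i unfolding k_def by auto
    define i0 where "i0 = (if j \<le> n then j else j - (n+1))"
    have i0: "1 \<le> i0" "i0 \<le> n" using jS jn unfolding i0_def by auto
    have v0_eq: "concat3 n {i0} True {i0} = {j, n+1, par j}" unfolding concat3_def i0_def par_def using jS jn by auto
    have pj: "par j \<noteq> j" "par j \<noteq> n+1" unfolding par_def using jS jn by auto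
    have w0V: "vadd z (concat3 n {i0} True {i0}) \<in> V"
    proof -
      have "vadd z (concat3 n {i0} True {i0}) = concat3 n (vadd y' {i0}) (lam y' \<noteq> True) (vadd {} {i0})"
        unfolding z_def by (rule concat3_vadd) (use y's i0 in auto)
      also have "\<dots> = concat3 n (vadd {i0} y') (wpar {i0} \<noteq> lam y') {i0}" by (simp add: vadd_comm wpar_def)
      finally show ?thesis using vas_mem[of "{i0}" n y' C lam] y' i0 unfolding V_def by auto
    qed
    have wV: "f vi \<in> V" using fV viV .
    have 1: "card (vadd (f vi) (vadd z (concat3 n {i0} True {i0}))) \<noteq> 2"
      using mindist[OF C] wV w0V unfolding V_def by blast
    have 2: "vadd (f vi) (vadd z (concat3 n {i0} True {i0})) = vadd {j, n+1, k} {j, n+1, par j}"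
      unfolding f_def P v0_eq by (auto simp: vadd_def)
    show "rho (i+n+1) = par (rho i)"
    proof (rule ccontr)
      assume "rho (i+n+1) \<noteq> par (rho i)"
      hence kp: "k \<noteq> par j" unfolding k_def j_def .
      have "vadd {j, n+1, k} {j, n+1, par j} = {k, par j}" using kj kn pj kp by (auto simp: vadd_def)
      hence "card (vadd {j,n+1,k} {j,n+1,par j}) = 2" using kp by simp
      thus False using 1 2 by simp
    qed
  qed
  have rcls: "\<And>i. 1 \<le> i \<Longrightarrow> i \<le> n \<Longrightarrow> (1 \<le> rho i \<and> rho i \<le> n) \<or> (n+1 < rho i \<and> rho i \<le> 2*n+1)"
  proof -
    fix i assume i: "1 \<le> i" "i \<le> n"
    have "rho i \<in> {1..2*n+1}" using rin i by auto
    moreover have "rho i \<noteq> n+1" using rinj[of i "n+1"] r1 i by auto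
    ultimately show "?thesis i" by auto
  qed
  define p where "p = (\<lambda>i. if 1 \<le> i \<and> i \<le> n then (if rho i \<le> n then rho i else rho i - (n+1)) else i)"
  define u where "u = {i. 1 \<le> i \<and> i \<le> n \<and> n+1 < rho i}"
  have us: "u \<subseteq> {1..n}" by (auto simp: u_def)
  have pp: "p permutes {1..n}"
  proof (rule perm_of_inj)
    show "p ` {1..n} \<subseteq> {1..n}"
    proof
      fix y assume "y \<in> p ` {1..n}"
      then obtain x where x: "x \<in> {1..n}" "y = p x" by auto
      show "y \<in> {1..n}" using x rcls[of x] unfolding p_def by auto
    qed
    show "inj_on p {1..n}"
    proof (rule inj_onI)
      fix a b assume a: "a \<in> {1..n}" and b: "b \<in> {1..n}" and e: "p a = p b"
      have Aa: "rho (a+n+1) = par (rho a)" using A a by auto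
      have Ab: "rho (b+n+1) = par (rho b)" using A b by auto
      have ca: "(1 \<le> rho a \<and> rho a \<le> n) \<or> (n+1 < rho a \<and> rho a \<le> 2*n+1)" using rcls a by auto
      have cb: "(1 \<le> rho b \<and> rho b \<le> n) \<or> (n+1 < rho b \<and> rho b \<le> 2*n+1)" using rcls b by auto
      have pa: "p a = (if rho a \<le> n then rho a else rho a - (n+1))" using a unfolding p_def by auto
      have pb: "p b = (if rho b \<le> n then rho b else rho b - (n+1))" using b unfolding p_def by auto
      show "a = b"
      proof (cases "rho a \<le> n")
        case True
        note aT = True
        show ?thesis
        proof (cases "rho b \<le> n")
          case True thus ?thesis using aT e pa pb rinj[of a b] by simp
        next
          case False
          hence "rho b = rho a + n + 1" using aT e pa pb cb by auto
          hence "rho b = rho (a+n+1)" using Aa aT unfolding par_def by simp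
          hence "b = a+n+1" using rinj by blast
          thus ?thesis using b by simp
        qed
      next
        case False
        note aF = False
        show ?thesis
        proof (cases "rho b \<le> n")
          case True
          hence "rho a = rho b + n + 1" using aF e pa pb ca by auto
          hence "rho a = rho (b+n+1)" using Ab True unfolding par_def by simp
          hence "a = b+n+1" using rinj by blast
          thus ?thesis using a by simp
        next
          case False thus ?thesis using aF e pa pb ca cb rinj[of a b] by auto
        qed
      qed
    qed
  qed (auto simp: p_def)
  have rho_eq: "rho = sigma n p \<circ> tau n u"
  proof
    fix j
    show "rho j = (sigma n p \<circ> tau n u) j"
    proof (cases "1 \<le> j \<and> j \<le> n")
      case True
      show ?thesis
      proof (cases "j \<in> u")
        case ju: True
        hence "swp n u j = j + n + 1" by (simp add: swp_def)
        moreover have "sigma n p (j+n+1) = p j + n + 1" using True by (simp add: sigma_def)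
        moreover have "p j = rho j - (n+1)" "n+1 < rho j" using True ju unfolding p_def u_def by auto
        ultimately show ?thesis unfolding tau_eq[OF us] by simp
      next
        case ju: False
        hence "swp n u j = j" using True by (simp add: swp_def)
        moreover have "sigma n p j = p j" using True by (simp add: sigma_def)
        moreover have "p j = rho j" using True ju rcls[of j] unfolding p_def u_def by auto
        ultimately show ?thesis unfolding tau_eq[OF us] by simp
      qed
    next
      case F1: False
      show ?thesis
      proof (cases "j = n+1")
        case True
        thus ?thesis unfolding tau_eq[OF us] using r1 swp_np1[OF us] sigma_np1 by simp
      next
        case F2: False
        show ?thesis
        proof (cases "1 \<le> j \<and> j \<le> 2*n+1")
          case True
          define i where "i = j - (n+1)"
          have i: "1 \<le> i" "i \<le> n" "j = i + n + 1" using True F1 F2 unfolding i_def by auto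
          have Ai: "rho j = par (rho i)" using A i by simp
          show ?thesis
          proof (cases "i \<in> u")
            case iu: True
            hence "swp n u j = i" using i us by (auto simp: swp_def)
            moreover have "sigma n p i = p i" using i by (simp add: sigma_def)
            moreover have "p i = rho i - (n+1)" "n+1 < rho i" using i iu unfolding p_def u_def by auto
            ultimately show ?thesis unfolding tau_eq[OF us] using Ai by (simp add: par_def)
          next
            case iu: False
            have "j \<notin> u" using i us by auto
            hence "swp n u j = j" using i iu by (simp add: swp_def)
            moreover have "sigma n p j = p i + n + 1" using i by (simp add: sigma_def)
            moreover have "p i = rho i" "rho i \<le> n" using i iu rcls[of i] unfolding p_def u_def by auto
            ultimately show ?thesis unfolding tau_eq[OF us] using Ai by (simp add: par_def)
          qed
        next
          case False
          have "j \<notin> u" "j - (n+1) \<notin> u" using False by (auto simp: u_def)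
          hence "swp n u j = j" by (simp add: swp_def)
          moreover have "sigma n p j = j" using False F1 unfolding sigma_def by auto
          moreover have "rho j = j" using False rout by simp
          ultimately show ?thesis unfolding tau_eq[OF us] by simp
        qed
      qed
    qed
  qed
  have key: "\<And>y. y \<in> C \<Longrightarrow> vadd y' (pact p y) \<in> C \<and> lam (vadd y' (pact p y)) = ((sprod u y \<noteq> lam y) \<noteq> lam y')"
  proof -
    fix y assume y: "y \<in> C"
    have ys: "y \<subseteq> {1..n}" using C_sub[OF C y] .
    define x where "x = y \<inter> u"
    have xs: "x \<subseteq> {1..n}" using ys x_def by auto
    have vV: "concat3 n (vadd x y) (wpar x \<noteq> lam y) x \<in> V" using vas_mem[OF xs y] unfolding V_def .
    have "f (concat3 n (vadd x y) (wpar x \<noteq> lam y) x) = concat3 n (vadd (p ` vadd x (y \<inter> u)) (vadd y' (p ` y))) ((wpar x \<noteq> lam y) \<noteq> lam y') (p ` vadd x (y \<inter> u))"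
      unfolding f_def z_def rho_eq by (rule act[OF pp us xs ys y's])
    also have "vadd x (y \<inter> u) = {}" unfolding x_def by simp
    finally have "f (concat3 n (vadd x y) (wpar x \<noteq> lam y) x) = concat3 n (vadd y' (p ` y)) ((wpar x \<noteq> lam y) \<noteq> lam y') {}" by simp
    hence "concat3 n (vadd y' (p ` y)) ((wpar x \<noteq> lam y) \<noteq> lam y') {} \<in> vasilev n C lam" using fV[OF vV] unfolding V_def by simp
    then obtain X Y where XY: "concat3 n (vadd y' (p ` y)) ((wpar x \<noteq> lam y) \<noteq> lam y') {} = concat3 n (vadd X Y) (wpar X \<noteq> lam Y) X"
      "X \<subseteq> {1..n}" "Y \<in> C"
      unfolding vasilev_def vecs_iff by blast
    have Ys: "Y \<subseteq> {1..n}" using C_sub[OF C XY(3)] .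
    have s1: "vadd y' (p ` y) \<subseteq> {1..n}" using vadd_sub[OF y's perm_sub[OF pp ys]] .
    have eqs: "vadd y' (p ` y) = vadd X Y" "((wpar x \<noteq> lam y) \<noteq> lam y') = (wpar X \<noteq> lam Y)" "{} = X"
      using concat3_inj[OF s1 _ vadd_sub[OF XY(2) Ys] XY(2) XY(1)] by auto
    have YY: "Y = vadd y' (p ` y)" using eqs(1) eqs(3) by simp
    have "wpar x = sprod u y" unfolding x_def sprod_wpar ..
    moreover have "wpar X = False" using eqs(3) by (simp add: wpar_def)
    ultimately show "?thesis y" using eqs(2) YY XY(3) unfolding pact_def by auto
  qed
  have pR: "p \<in> Rot n y' C"
  proof -
    define g where "g = (\<lambda>d. vadd y' (pact p d))"
    have "g ` C \<subseteq> C" using key unfolding g_def by auto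
    moreover have "inj_on g C"
    proof (rule inj_onI)
      fix a b assume "g a = g b"
      hence "vadd y' (vadd y' (pact p a)) = vadd y' (vadd y' (pact p b))" unfolding g_def by simp
      hence "p ` a = p ` b" unfolding pact_def by simp
      thus "a = b" using permutes_inj[OF pp] by (simp add: inj_image_eq_iff)
    qed
    ultimately have "g ` C = C" using endo_inj_surj C_fin[OF C] by blast
    thus ?thesis using pp unfolding Rot_def g_def by simp
  qed
  have uv: "u \<in> vecs n" using us by (simp add: vecs_iff)
  show ?thesis
  proof (intro bexI conjI)
    show "\<forall>y \<in> C. (lam y' \<noteq> lam y) \<noteq> lam (vadd y' (pact p y)) \<longleftrightarrow> sprod u y"
      using key by auto
  qed (use rho_eq pR uv in auto)
qed


theorem theorem2:
  fixes k n :: nat and C :: "nat set set" and lam :: "nat set \<Rightarrow> bool"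
    and y' :: "nat set" and rho :: "nat \<Rightarrow> nat"
  assumes "n = 2 ^ k - 1"
    and "perfect_code n C"
    and "{} \<in> C"
    and "\<not> lam {}"
    and "y' \<in> C"
  shows "rho \<in> St (n + 1) (Rot (2 * n + 1) (concat3 n y' (lam y') {}) (vasilev n C lam))
     \<longleftrightarrow> (\<exists>p \<in> Rot n y' C. \<exists>u \<in> vecs n.
            rho = sigma n p \<circ> tau n u \<and>
            (\<forall>y \<in> C. (lam y' \<noteq> lam y) \<noteq> lam (vadd y' (pact p y)) \<longleftrightarrow> sprod u y))"
proof
  assume "rho \<in> St (n + 1) (Rot (2 * n + 1) (concat3 n y' (lam y') {}) (vasilev n C lam))"
  thus "\<exists>p \<in> Rot n y' C. \<exists>u \<in> vecs n.
            rho = sigma n p \<circ> tau n u \<and>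
            (\<forall>y \<in> C. (lam y' \<noteq> lam y) \<noteq> lam (vadd y' (pact p y)) \<longleftrightarrow> sprod u y)"
    by (rule fwd_dir[of n C y' lam, OF assms(2) assms(5) assms(4) assms(3)])
next
  assume "\<exists>p \<in> Rot n y' C. \<exists>u \<in> vecs n.
            rho = sigma n p \<circ> tau n u \<and>
            (\<forall>y \<in> C. (lam y' \<noteq> lam y) \<noteq> lam (vadd y' (pact p y)) \<longleftrightarrow> sprod u y)"
  then obtain p u where p: "p \<in> Rot n y' C" and u: "u \<in> vecs n" and rho: "rho = sigma n p \<circ> tau n u"
    and c: "\<forall>y \<in> C. ((lam y' \<noteq> lam y) \<noteq> lam (vadd y' (pact p y))) = sprod u y" by blast
  show "rho \<in> St (n + 1) (Rot (2 * n + 1) (concat3 n y' (lam y') {}) (vasilev n C lam))"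
    unfolding rho using back_dir[OF assms(2) assms(5) p u c] .
qed

end
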